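(* Let $(\Omega,\mathcal{F})$ be a measurable space and $T:\Omega\to\Omega$ a measurable map. Let $\mathbb{V}(A)=\sup_{P\in\Theta}P(A)$, $A\in\mathcal{F}$, be an upper probability, where $\Theta=\{P \text{ probability on }(\Omega,\mathcal{F}) : P(A)\le \mathbb{V}(A)\ \forall A\in\mathcal{F}\}$. Assume $\mathbb{V}$ is continuous (from above), $T$-invariant, and $T$-ergodic. Let $\Theta_0$ be the set of $T$-invariant probabilities in $\Theta$. Let $P^*$ be a $T$-ergodic probability on $(\Omega,\mathcal{F})$. If there exists $P\in\Theta_0$ such that $P^*$ is absolutely continuous with respect to $P$, then $P^*\in\Theta_0$.
   Context: $\mathcal{I}=\{A\in\mathcal{F}: T^{-1}A=A\}$ is the $T$-invariant $\sigma$-algebra. $\mathbb{V}$ is continuous if $\mathbb{V}(A_n)\to 0$ whenever $A_n\in\mathcal{F}$, $A_n\downarrow\emptyset$. $\mathbb{V}$ is $T$-invariant if $\mathbb{V}(T^{-1}A)=\mathbb{V}(A)$ for all $A\in\mathcal{F}$. A continuous upper probability $\mathbb{V}$ is $T$-ergodic if $\mathbb{V}(A)\in\{0,1\}$ for every $A\in\mathcal{I}$. A probability $P$ is $T$-invariant if $P(T^{-1}A)=P(A)$ for all $A\in\mathcal{F}$, and $T$-ergodic if it is $T$-invariant and $P(A)\in\{0,1\}$ for all $A\in\mathcal{I}$. *)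

theory Defs
  imports "HOL-Probability.Probability"
begin

text \<open>The measurable space is represented by a measure M of which only space M and sets M
 are used. Set functions are real valued on sets M.\<close>

definition inv_sets :: "'a measure \<Rightarrow> ('a \<Rightarrow> 'a) \<Rightarrow> 'a set set" where
  "inv_sets M T = {A \<in> sets M. T -` A \<inter> space M = A}"

definition prob_on :: "'a measure \<Rightarrow> 'a measure \<Rightarrow> bool" where
  "prob_on M P \<longleftrightarrow> prob_space P \<and> sets P = sets M"

definition core :: "'a measure \<Rightarrow> ('a set \<Rightarrow> real) \<Rightarrow> 'a measure set" where
  "core M V = {P. prob_on M P \<and> (\<forall>A\<in>sets M. measure P A \<le> V A)}"

definition upper_probability :: "'a measure \<Rightarrow> ('a set \<Rightarrow> real) \<Rightarrow> bool" where
  "upper_probability M V \<longleftrightarrow> (\<forall>A\<in>sets M. V A = (SUP P\<in>core M V. measure P A))"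

definition continuous_capacity :: "'a measure \<Rightarrow> ('a set \<Rightarrow> real) \<Rightarrow> bool" where
  "continuous_capacity M V \<longleftrightarrow>
     (\<forall>An. (\<forall>n. An n \<in> sets M) \<longrightarrow> decseq An \<longrightarrow> (\<Inter>n. An n) = {} \<longrightarrow>
        (\<lambda>n. V (An n)) \<longlonglongrightarrow> 0)"

definition invariant_capacity :: "'a measure \<Rightarrow> ('a \<Rightarrow> 'a) \<Rightarrow> ('a set \<Rightarrow> real) \<Rightarrow> bool" where
  "invariant_capacity M T V \<longleftrightarrow> (\<forall>A\<in>sets M. V (T -` A \<inter> space M) = V A)"

definition ergodic_capacity :: "'a measure \<Rightarrow> ('a \<Rightarrow> 'a) \<Rightarrow> ('a set \<Rightarrow> real) \<Rightarrow> bool" where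
  "ergodic_capacity M T V \<longleftrightarrow> (\<forall>A\<in>inv_sets M T. V A = 0 \<or> V A = 1)"

definition invariant_prob :: "'a measure \<Rightarrow> ('a \<Rightarrow> 'a) \<Rightarrow> 'a measure \<Rightarrow> bool" where
  "invariant_prob M T P \<longleftrightarrow> prob_on M P \<and>
     (\<forall>A\<in>sets M. measure P (T -` A \<inter> space M) = measure P A)"

definition ergodic_prob :: "'a measure \<Rightarrow> ('a \<Rightarrow> 'a) \<Rightarrow> 'a measure \<Rightarrow> bool" where
  "ergodic_prob M T P \<longleftrightarrow> invariant_prob M T P \<and>
     (\<forall>A\<in>inv_sets M T. measure P A = 0 \<or> measure P A = 1)"

definition invariant_core :: "'a measure \<Rightarrow> ('a \<Rightarrow> 'a) \<Rightarrow> ('a set \<Rightarrow> real) \<Rightarrow> 'a measure set" where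
  "invariant_core M T V = {P \<in> core M V. invariant_prob M T P}"

end

theory Submission
  imports Defs
begin

lemma block_aux:
  fixes a b :: "nat \<Rightarrow> real" and c :: real and N L :: nat
  assumes a01: "\<And>k. 0 \<le> a k \<and> a k \<le> 1" and b0: "\<And>k. 0 \<le> b k" and c0: "c \<ge> 0"
    and blk: "\<And>k. b k \<ge> 1 \<or> (\<exists>n. 1 \<le> n \<and> n \<le> N \<and> (\<Sum>i<n. a (k+i)) \<le> n*c)"
  shows "L - j = d \<Longrightarrow> (\<Sum>k\<in>{j..<L}. a k) \<le> real (L-j)*c + (\<Sum>k\<in>{j..<L}. b k) + N"
proof (induction d arbitrary: j rule: less_induct)
  case (less d)
  have bsum: "\<And>u v. 0 \<le> (\<Sum>k\<in>{u..<v}. b k)" by (simp add: b0 sum_nonneg)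
  show ?case
  proof (cases "j < L")
    case False then show ?thesis using bsum[of j L] by simp
  next
    case jL: True
    from blk[of j] show ?thesis
    proof
      assume bj: "b j \<ge> 1"
      have IH: "(\<Sum>k\<in>{Suc j..<L}. a k) \<le> real (L - Suc j)*c + (\<Sum>k\<in>{Suc j..<L}. b k) + N"
        using less.IH[of "L - Suc j" "Suc j"] less.prems jL by simp
      have s1: "(\<Sum>k\<in>{j..<L}. a k) = a j + (\<Sum>k\<in>{Suc j..<L}. a k)"
        using jL by (simp add: sum.atLeast_Suc_lessThan)
      have s2: "(\<Sum>k\<in>{j..<L}. b k) = b j + (\<Sum>k\<in>{Suc j..<L}. b k)"
        using jL by (simp add: sum.atLeast_Suc_lessThan)
      have "real (L-j) = real (L - Suc j) + 1" using jL by simp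
      hence "real (L-j)*c = real (L - Suc j)*c + c" by (simp add: algebra_simps)
      then show ?thesis using s1 s2 IH a01[of j] bj c0 by linarith
    next
      assume "\<exists>n. 1 \<le> n \<and> n \<le> N \<and> (\<Sum>i<n. a (j+i)) \<le> n*c"
      then obtain n where n1: "1 \<le> n" and nN: "n \<le> N" and sn: "(\<Sum>i<n. a (j+i)) \<le> n*c" by blast
      show ?thesis
      proof (cases "j + n \<le> L")
        case True
        have IH: "(\<Sum>k\<in>{j+n..<L}. a k) \<le> real (L - (j+n))*c + (\<Sum>k\<in>{j+n..<L}. b k) + N"
          using less.IH[of "L - (j+n)" "j+n"] less.prems jL n1 by simp
        have sp: "\<And>f::nat\<Rightarrow>real. (\<Sum>k\<in>{j..<L}. f k) = (\<Sum>k\<in>{j..<j+n}. f k) + (\<Sum>k\<in>{j+n..<L}. f k)"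
          using True by (simp add: sum.atLeastLessThan_concat)
        have sh: "(\<Sum>k\<in>{j..<j+n}. a k) = (\<Sum>i<n. a (j+i))"
          using sum.atLeastLessThan_shift_bounds[of a 0 j n] by (simp add: lessThan_atLeast0 add.commute comp_def)
        have bn: "0 \<le> (\<Sum>k\<in>{j..<j+n}. b k)" by (rule bsum)
        have "real (L-j) = real (L - (j+n)) + real n" using True by simp
        hence "real (L-j)*c = real (L - (j+n))*c + n*c" by (simp add: algebra_simps)
        then show ?thesis using sp[of a] sp[of b] sh IH sn bn by linarith
      next
        case False
        have "(\<Sum>k\<in>{j..<L}. a k) \<le> (\<Sum>k\<in>{j..<L}. 1)" by (rule sum_mono) (use a01 in blast)
        also have "\<dots> = real (L - j)" by simp
        also have "\<dots> \<le> N" using False nN by simp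
        finally show ?thesis using bsum[of j L] c0 by (simp add: add_increasing)
      qed
    qed
  qed
qed

lemma block:
  fixes a b :: "nat \<Rightarrow> real" and c :: real and N L :: nat
  assumes "\<And>k. 0 \<le> a k \<and> a k \<le> 1" "\<And>k. 0 \<le> b k" "c \<ge> 0"
    "\<And>k. b k \<ge> 1 \<or> (\<exists>n. 1 \<le> n \<and> n \<le> N \<and> (\<Sum>i<n. a (k+i)) \<le> n*c)"
  shows "(\<Sum>k<L. a k) \<le> real L*c + (\<Sum>k<L. b k) + N"
  using block_aux[OF assms, of L 0 L] by (simp add: lessThan_atLeast0)

lemma measurable_funpow: "T \<in> measurable M M \<Longrightarrow> (T ^^ k) \<in> measurable M M"
  by (induction k) (auto simp: measurable_ident intro: measurable_comp)


lemma funpow_space: assumes "T \<in> measurable M M" "x \<in> space M" shows "(T ^^ k) x \<in> space M"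
  using measurable_space[OF measurable_funpow[OF assms(1)] assms(2)] .

lemma pre_sets: "T \<in> measurable M M \<Longrightarrow> C \<in> sets M \<Longrightarrow> (T ^^ k) -` C \<inter> space M \<in> sets M"
  using measurable_sets[OF measurable_funpow] by blast

lemma pre_Suc: assumes "T \<in> measurable M M"
  shows "(T ^^ Suc k) -` C \<inter> space M = T -` ((T ^^ k) -` C \<inter> space M) \<inter> space M"
  using measurable_space[OF assms] by (auto simp: funpow_Suc_right funpow_swap1)

lemma pre_inv:
  assumes T: "T \<in> measurable M M" and f: "\<And>C. C \<in> sets M \<Longrightarrow> f (T -` C \<inter> space M) = f C"
    and C: "C \<in> sets M"
  shows "f ((T ^^ k) -` C \<inter> space M) = f C"
proof (induction k)
  case 0 then show ?case using sets.sets_into_space[OF C] by (simp add: Int_absorb2)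
next
  case (Suc k)
  have "f ((T ^^ Suc k) -` C \<inter> space M) = f (T -` ((T ^^ k) -` C \<inter> space M) \<inter> space M)"
    by (simp only: pre_Suc[OF T])
  also have "\<dots> = f ((T ^^ k) -` C \<inter> space M)" by (rule f[OF pre_sets[OF T C]])
  also have "\<dots> = f C" by (rule Suc.IH)
  finally show ?case .
qed

lemma int_sum:
  assumes T: "T \<in> measurable M M" and Q: "prob_space Q" "sets Q = sets M" and C: "C \<in> sets M"
  shows "integrable Q (\<lambda>x. \<Sum>k<L. indicator C ((T ^^ k) x) :: real)"
    "(\<integral>x. (\<Sum>k<L. indicator C ((T ^^ k) x) :: real) \<partial>Q) = (\<Sum>k<L. measure Q ((T ^^ k) -` C \<inter> space M))"
proof -
  interpret Q: prob_space Q by fact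
  have sp: "space Q = space M" using Q(2) by (rule sets_eq_imp_space_eq)
  have eq: "\<And>k x. x \<in> space Q \<Longrightarrow> (indicator C ((T ^^ k) x) :: real) = indicator ((T ^^ k) -` C \<inter> space M) x"
    using sp by (auto simp: indicator_def)
  have ps: "\<And>k. (T ^^ k) -` C \<inter> space M \<in> sets Q" using pre_sets[OF T C] Q(2) by simp
  have ii: "integrable Q (\<lambda>x. indicator C ((T ^^ k) x) :: real)" for k
  proof -
    have "integrable Q (\<lambda>x. indicator C ((T ^^ k) x) :: real) \<longleftrightarrow> integrable Q (indicator ((T ^^ k) -` C \<inter> space M) :: _ \<Rightarrow> real)"
      by (rule Bochner_Integration.integrable_cong) (auto simp: eq)
    then show ?thesis using ps[of k] by (simp add: Q.emeasure_finite less_top[symmetric])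
  qed
  show "integrable Q (\<lambda>x. \<Sum>k<L. indicator C ((T ^^ k) x) :: real)" using ii by auto
  have "(\<integral>x. (\<Sum>k<L. indicator C ((T ^^ k) x) :: real) \<partial>Q) = (\<Sum>k<L. (\<integral>x. indicator C ((T ^^ k) x) \<partial>Q))"
    using ii by (simp add: Bochner_Integration.integral_sum)
  also have "\<dots> = (\<Sum>k<L. measure Q ((T ^^ k) -` C \<inter> space M))"
    apply (rule sum.cong[OF refl])
    apply (subst Bochner_Integration.integral_cong[OF refl eq], assumption)
    using ps sets.sets_into_space[OF ps] by (simp add: Int_absorb2)
  finally show "(\<integral>x. (\<Sum>k<L. indicator C ((T ^^ k) x) :: real) \<partial>Q) = (\<Sum>k<L. measure Q ((T ^^ k) -` C \<inter> space M))" .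
qed


theorem lemma3p2:
  fixes M :: "'a measure" and T :: "'a \<Rightarrow> 'a" and V :: "'a set \<Rightarrow> real"
    and Pstar :: "'a measure"
  assumes "T \<in> measurable M M"
    and "upper_probability M V"
    and "continuous_capacity M V"
    and "invariant_capacity M T V"
    and "ergodic_capacity M T V"
    and "ergodic_prob M T Pstar"
    and "\<exists>P\<in>invariant_core M T V. absolutely_continuous P Pstar"
  shows "Pstar \<in> invariant_core M T V"
proof -
  note Tm = assms(1)
  obtain P where P: "P \<in> invariant_core M T V" "absolutely_continuous P Pstar" using assms(7) by blast
  have Pc: "P \<in> core M V" using P(1) by (simp add: invariant_core_def)
  have Pps: "prob_space P" "sets P = sets M" using Pc by (auto simp: core_def prob_on_def)
  have PV: "\<And>A. A \<in> sets M \<Longrightarrow> measure P A \<le> V A" using Pc by (auto simp: core_def)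
  have muinv: "invariant_prob M T Pstar" using assms(6) by (simp add: ergodic_prob_def)
  have mups: "prob_space Pstar" "sets Pstar = sets M" using muinv by (auto simp: invariant_prob_def prob_on_def)
  have muT: "\<And>A. A \<in> sets M \<Longrightarrow> measure Pstar (T -` A \<inter> space M) = measure Pstar A"
    using muinv by (auto simp: invariant_prob_def)
  have VT: "\<And>A. A \<in> sets M \<Longrightarrow> V (T -` A \<inter> space M) = V A"
    using assms(4) by (auto simp: invariant_capacity_def)
  interpret mu: prob_space Pstar by fact
  interpret PP: prob_space P by fact
  have spmu: "space Pstar = space M" using mups(2) by (rule sets_eq_imp_space_eq)
  have Tsp: "\<And>x. x \<in> space M \<Longrightarrow> T x \<in> space M" using measurable_space[OF Tm] by blast
  have core_ne: "core M V \<noteq> {}" using Pc by blast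
  have core_bdd: "bdd_above ((\<lambda>Q. measure Q G) ` core M V)" for G
  proof (rule bdd_aboveI)
    fix r assume "r \<in> (\<lambda>Q. measure Q G) ` core M V"
    then obtain Q where "Q \<in> core M V" "r = measure Q G" by blast
    then show "r \<le> 1" by (auto simp: core_def prob_on_def intro: prob_space.prob_le_1)
  qed
  have Vsup: "\<And>A. A \<in> sets M \<Longrightarrow> V A = (SUP Q\<in>core M V. measure Q A)"
    using assms(2) by (simp add: upper_probability_def)
  have [measurable]: "\<And>k. T ^^ k \<in> measurable M M" using measurable_funpow[OF Tm] .
  have main: "measure Pstar A \<le> V A" if A: "A \<in> sets M" for A
  proof (rule ccontr)
    assume "\<not> measure Pstar A \<le> V A"
    hence lt: "V A < measure Pstar A" by simp
    have V0: "0 \<le> V A" using PV[OF A] by (meson measure_nonneg order_trans)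
    define s where "s = (V A + measure Pstar A) / 2"
    have s1: "V A < s" "s < measure Pstar A" "0 < s" using lt V0 by (auto simp: s_def)
    define S where "S n x = (\<Sum>k<n. indicator A ((T ^^ k) x) :: real)" for n x
    have S_meas[measurable]: "(\<lambda>x. S n x) \<in> borel_measurable M" for n unfolding S_def using A by measurable
    have S_shift: "S n (T x) \<le> S n x + 1 \<and> S n x \<le> S n (T x) + 1" if x: "x \<in> space M" for n x
    proof -
      have e1: "S (Suc n) x = indicator A x + S n (T x)"
        unfolding S_def by (subst sum.lessThan_Suc_shift) (simp add: funpow_swap1 funpow_Suc_right)
      have e2: "S (Suc n) x = S n x + indicator A ((T ^^ n) x)"
        unfolding S_def by simp
      have "0 \<le> (indicator A x::real)" "(indicator A x::real) \<le> 1"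
        "0 \<le> (indicator A ((T ^^ n) x)::real)" "(indicator A ((T ^^ n) x)::real) \<le> 1"
        by (auto simp: indicator_def)
      then show ?thesis using e1 e2 by linarith
    qed
    define H where "H m N = {x\<in>space M. \<forall>n\<ge>N. real n * (s + 1 / (real m + 1)) \<le> S n x}" for m N :: nat
    define G where "G = (\<Union>m. \<Union>N. H m N)"
    have H_meas: "H m N \<in> sets M" for m N unfolding H_def by measurable
    have G_meas: "G \<in> sets M" unfolding G_def using H_meas by blast
    have H_mono: "H m N \<subseteq> H m' N'" if "m \<le> m'" "N \<le> N'" for m m' N N'
    proof
      fix x assume "x \<in> H m N"
      then have x: "x \<in> space M" "\<And>n. n \<ge> N \<Longrightarrow> real n * (s + 1 / (real m + 1)) \<le> S n x"
        by (auto simp: H_def)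
      have "1 / (real m' + 1) \<le> 1 / (real m + 1)" using that by (simp add: frac_le)
      then have "real n * (s + 1 / (real m' + 1)) \<le> real n * (s + 1 / (real m + 1))" for n
        by (intro mult_left_mono) auto
      then show "x \<in> H m' N'" using x that
        unfolding H_def by (auto intro: order_trans)
    qed
    have G_shift: "y \<in> G" if x: "x \<in> space M" and y: "y \<in> space M"
      and xy: "\<And>n. S n x \<le> S n y + 1" and xG: "x \<in> G" for x y
    proof -
      from xG obtain m N where "x \<in> H m N" unfolding G_def by blast
      then have xH: "\<And>n. n \<ge> N \<Longrightarrow> real n * (s + 1 / (real m + 1)) \<le> S n x" by (auto simp: H_def)
      define q where "q = real m + 1"
      have q0: "q > 0" by (simp add: q_def)
      have "y \<in> H (2*m+1) (max N (2*m+2))"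
        unfolding H_def
      proof (intro CollectI conjI allI impI)
        show "y \<in> space M" by fact
        fix n assume n: "max N (2*m+2) \<le> n"
        have q2: "real (2*m+1) + 1 = 2*q" by (simp add: q_def)
        have "2*q \<le> real n" using n by (simp add: q_def)
        hence "1 \<le> real n / (2*q)" using q0 by simp
        moreover have "real n * (s + 1/q) = real n * (s + 1/(2*q)) + real n / (2*q)"
          using q0 by (simp add: field_simps)
        moreover have "real n * (s + 1/q) \<le> S n x" using xH n by (simp add: q_def)
        ultimately show "real n * (s + 1 / (real (2*m+1) + 1)) \<le> S n y"
          using xy[of n] unfolding q2 by linarith
      qed
      then show ?thesis unfolding G_def by blast
    qed
    have G_inv: "G \<in> inv_sets M T"
    proof -
      have "G \<subseteq> space M" using G_meas by (rule sets.sets_into_space)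
      moreover have "x \<in> G \<longleftrightarrow> T x \<in> G" if "x \<in> space M" for x
        using G_shift[OF that Tsp[OF that]] G_shift[OF Tsp[OF that] that] S_shift[OF that] by blast
      ultimately have "T -` G \<inter> space M = G" by blast
      then show ?thesis using G_meas by (simp add: inv_sets_def)
    qed
    have sumpre: "(\<Sum>k<L. f ((T ^^ k) -` C \<inter> space M)) = real L * f C"
      if "\<And>C. C \<in> sets M \<Longrightarrow> f (T -` C \<inter> space M) = f C" "C \<in> sets M" for f :: "'a set \<Rightarrow> real" and C L
      using pre_inv[where f=f, OF Tm that(1) that(2)] by simp
    have muG: "measure Pstar G > 0"
    proof (rule ccontr)
      assume "\<not> measure Pstar G > 0"
      hence muG0: "measure Pstar G = 0" using measure_nonneg[of Pstar G] by linarith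
      define eps where "eps = (measure Pstar A - s) / 4"
      have eps0: "eps > 0" using s1 by (simp add: eps_def)
      obtain m :: nat where m: "inverse (real (Suc m)) < eps" using reals_Archimedean[OF eps0] by blast
      have m': "1 / (real m + 1) \<le> eps" using m by (simp add: field_simps)
      define F where "F N = {x\<in>space M. \<forall>n\<in>{1..N}. real n * (s + eps) < S n x}" for N :: nat
      have F_meas: "F N \<in> sets M" for N unfolding F_def by measurable
      have F_dec: "decseq F" unfolding decseq_def F_def by auto
      have F_G: "(\<Inter>N. F N) \<subseteq> G"
      proof
        fix x assume x: "x \<in> (\<Inter>N. F N)"
        have "x \<in> H m 1" unfolding H_def
        proof (intro CollectI conjI allI impI)
          show "x \<in> space M" using x by (auto simp: F_def)
          fix n :: nat assume n: "1 \<le> n"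
          have "x \<in> F n" using x by blast
          then have "real n * (s + eps) < S n x" using n by (auto simp: F_def)
          moreover have "real n * (s + 1 / (real m + 1)) \<le> real n * (s + eps)"
            using m' by (intro mult_left_mono) auto
          ultimately show "real n * (s + 1 / (real m + 1)) \<le> S n x" by linarith
        qed
        then show "x \<in> G" unfolding G_def by blast
      qed
      have "(\<lambda>N. measure Pstar (F N)) \<longlonglongrightarrow> measure Pstar (\<Inter>N. F N)"
        by (rule mu.finite_Lim_measure_decseq) (use F_meas mups(2) F_dec in auto)
      moreover have "measure Pstar (\<Inter>N. F N) = 0"
        using mu.finite_measure_mono[OF F_G] G_meas mups(2) muG0 measure_nonneg[of Pstar "\<Inter>N. F N"]
        by (simp add: antisym)
      ultimately have "eventually (\<lambda>N. measure Pstar (F N) < eps) sequentially"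
        using eps0 by (auto dest: order_tendstoD(2))
      then obtain N where FN: "measure Pstar (F N) < eps" by (auto simp: eventually_sequentially)
      obtain L :: nat where L: "real N < real L * eps" using ex_less_of_nat_mult[OF eps0] by blast
      have pw: "S L x \<le> real L * (s + eps) + (\<Sum>k<L. indicator (F N) ((T ^^ k) x)) + real N"
        if x: "x \<in> space M" for x
        unfolding S_def
      proof (rule block)
        show "0 \<le> s + eps" using s1 eps0 by simp
        fix k
        show "0 \<le> (indicator A ((T ^^ k) x)::real) \<and> (indicator A ((T ^^ k) x)::real) \<le> 1"
          by (auto simp: indicator_def)
        show "0 \<le> (indicator (F N) ((T ^^ k) x)::real)" by (auto simp: indicator_def)
        have y: "(T ^^ k) x \<in> space M" using funpow_space[OF Tm x] .
        show "1 \<le> (indicator (F N) ((T ^^ k) x)::real) \<or>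
          (\<exists>n\<ge>1. n \<le> N \<and> (\<Sum>i<n. indicator A ((T ^^ (k + i)) x)) \<le> real n * (s + eps))"
        proof (cases "(T ^^ k) x \<in> F N")
          case True then show ?thesis by simp
        next
          case False
          then obtain n where n: "n \<in> {1..N}" "\<not> real n * (s + eps) < S n ((T ^^ k) x)"
            using y by (auto simp: F_def)
          have "S n ((T ^^ k) x) = (\<Sum>i<n. indicator A ((T ^^ (k + i)) x))"
            unfolding S_def by (simp add: funpow_add add.commute[of k])
          then show ?thesis using n by (intro disjI2 exI[of _ n]) auto
        qed
      qed
      note iA = int_sum[OF Tm mups A, of L] and iF = int_sum[OF Tm mups F_meas[of N], of L]
      have "(\<integral>x. S L x \<partial>Pstar) \<le> (\<integral>x. real L * (s + eps) + (\<Sum>k<L. indicator (F N) ((T ^^ k) x)) + real N \<partial>Pstar)"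
        by (rule integral_mono) (use iA iF pw spmu in \<open>auto simp: S_def\<close>)
      also have "\<dots> = real L * (s + eps) + (\<Sum>k<L. measure Pstar ((T ^^ k) -` F N \<inter> space M)) + real N"
        using iF by (simp add: mu.prob_space)
      finally have "real L * measure Pstar A \<le> real L * (s + eps) + real L * measure Pstar (F N) + real N"
        using iA sumpre[of "measure Pstar" A L, OF muT A] sumpre[of "measure Pstar" "F N" L, OF muT F_meas[of N]] by (simp add: S_def)
      also have "\<dots> < real L * (s + eps) + real L * eps + real L * eps"
        using FN L by (smt (verit) mult_left_mono of_nat_0_le_iff)
      finally have "real L * measure Pstar A < real L * (s + 3 * eps)" by (simp add: algebra_simps)
      hence "measure Pstar A < s + 3 * eps" by (simp add: mult_less_cancel_left)
      moreover have "4 * eps = measure Pstar A - s" by (simp add: eps_def)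
      ultimately show False using s1(2) by linarith
    qed
    have PG: "measure P G > 0"
    proof (rule ccontr)
      assume "\<not> measure P G > 0"
      hence "measure P G = 0" using measure_nonneg[of P G] by linarith
      hence "G \<in> null_sets P" using G_meas Pps(2) by (simp add: PP.emeasure_eq_measure null_sets_def)
      hence "G \<in> null_sets Pstar" using P(2) by (auto simp: absolutely_continuous_def)
      hence "measure Pstar G = 0" by (simp add: measure_def null_setsD1)
      then show False using muG by simp
    qed
    have VG: "V G = 1"
      using assms(5) G_inv PV[OF G_meas] PG by (auto simp: ergodic_capacity_def)
    define del where "del = (s - V A) / (2 * s)"
    have "1 - del < (SUP Q\<in>core M V. measure Q G)"
      using Vsup[OF G_meas] VG s1 by (simp add: del_def)
    then obtain Q where Q: "Q \<in> core M V" "1 - del < measure Q G"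
      using less_cSUP_iff[OF core_ne core_bdd] by blast
    have Qps: "prob_space Q" "sets Q = sets M" using Q(1) by (auto simp: core_def prob_on_def)
    have QV: "\<And>B. B \<in> sets M \<Longrightarrow> measure Q B \<le> V B" using Q(1) by (auto simp: core_def)
    interpret QQ: prob_space Q by fact
    have spQ: "space Q = space M" using Qps(2) by (rule sets_eq_imp_space_eq)
    have Hinc: "incseq (\<lambda>j. H j j)" unfolding incseq_def using H_mono by blast
    have HG: "(\<Union>j. H j j) = G"
    proof
      show "(\<Union>j. H j j) \<subseteq> G" unfolding G_def by blast
      show "G \<subseteq> (\<Union>j. H j j)" unfolding G_def
      proof
        fix x assume "x \<in> (\<Union>m. \<Union>N. H m N)"
        then obtain m N where "x \<in> H m N" by blast
        moreover have "H m N \<subseteq> H (max m N) (max m N)" by (rule H_mono) auto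
        ultimately show "x \<in> (\<Union>j. H j j)" by blast
      qed
    qed
    have "(\<lambda>j. measure Q (H j j)) \<longlonglongrightarrow> measure Q (\<Union>j. H j j)"
      by (rule QQ.finite_Lim_measure_incseq) (use H_meas Qps(2) Hinc in auto)
    then have "eventually (\<lambda>j. 1 - del < measure Q (H j j)) sequentially"
      using Q(2) HG by (auto dest: order_tendstoD(1))
    then obtain j where j: "1 - del < measure Q (H j j)" by (auto simp: eventually_sequentially)
    define L where "L = Suc j"
    have pw: "real L * s * indicator (H j j) x \<le> S L x" if "x \<in> space M" for x
    proof (cases "x \<in> H j j")
      case True
      then have "\<forall>n\<ge>j. real n * (s + 1 / (real j + 1)) \<le> S n x" by (simp add: H_def)
      then have "real L * (s + 1 / (real j + 1)) \<le> S L x" unfolding L_def by (metis le_SucI order_refl)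
      moreover have "real L * s \<le> real L * (s + 1 / (real j + 1))" by (simp add: algebra_simps)
      ultimately show ?thesis using True by simp
    next
      case False
      have "0 \<le> S L x" unfolding S_def by (simp add: sum_nonneg)
      then show ?thesis using False by simp
    qed
    note iA = int_sum[OF Tm Qps A, of L]
    have iH: "integrable Q (indicator (H j j) :: _ \<Rightarrow> real)"
      using H_meas[of j j] Qps(2) by (simp add: QQ.emeasure_finite less_top[symmetric])
    have "(\<integral>x. real L * s * indicator (H j j) x \<partial>Q) \<le> (\<integral>x. S L x \<partial>Q)"
      by (rule integral_mono) (use iA iH pw spQ H_meas Qps(2) in \<open>auto simp: S_def\<close>)
    also have "\<dots> = (\<Sum>k<L. measure Q ((T ^^ k) -` A \<inter> space M))" using iA by (simp add: S_def)
    also have "\<dots> \<le> (\<Sum>k<L. V ((T ^^ k) -` A \<inter> space M))"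
      by (rule sum_mono) (rule QV[OF pre_sets[OF Tm A]])
    also have "\<dots> = real L * V A" using sumpre[of V A L, OF VT A] .
    finally have "real L * (s * measure Q (H j j)) \<le> real L * V A"
      using H_meas Qps(2) by (simp add: mult.assoc)
    hence "s * measure Q (H j j) \<le> V A" by (simp add: L_def)
    moreover have "s * (1 - del) < s * measure Q (H j j)" using j s1 by simp
    moreover have "s * (1 - del) = (s + V A) / 2" using s1 by (simp add: del_def field_simps)
    ultimately have "(s + V A) / 2 < V A" by linarith
    then show False using s1 by simp
  qed
  show ?thesis
    using muinv main by (auto simp: invariant_core_def core_def invariant_prob_def)
qed

end
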